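(* Let $B$ be the regular binary rooted tree (the root has degree two and every other vertex has degree three) with simplicial metric $d_B$. Let $Y$ be a connected graph of bounded degree with simplicial metric $d_Y$. Suppose there exist a map $f:VB\to VY$ from the vertex set of $B$ to the vertex set of $Y$ and a constant $C>0$ such that for all vertices $u,v\in VB$ $$\frac1C d_B(u,v)-C\le d_Y(f(u),f(v))\le C\,d_B(u,v)+C.$$ Then $Y$ is transient (the simple random walk on $Y$ returns to its starting vertex with probability strictly less than 1).
   Context: Simplicial metric: path metric on a graph in which every edge has length one. *)

theory Defs
  imports Complex_Main "HOL-Library.Extended_Nonnegative_Real"
begin

definition simple_graph :: "'a set \<Rightarrow> ('a \<Rightarrow> 'a \<Rightarrow> bool) \<Rightarrow> bool" where
  "simple_graph V E \<longleftrightarrow> (\<forall>u w. E u w \<longrightarrow> u \<in> V \<and> w \<in> V \<and> E w u \<and> u \<noteq> w)"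

definition walk :: "('a \<Rightarrow> 'a \<Rightarrow> bool) \<Rightarrow> 'a list \<Rightarrow> bool" where
  "walk E xs \<longleftrightarrow> xs \<noteq> [] \<and> (\<forall>i. Suc i < length xs \<longrightarrow> E (xs ! i) (xs ! Suc i))"

definition connected_graph :: "'a set \<Rightarrow> ('a \<Rightarrow> 'a \<Rightarrow> bool) \<Rightarrow> bool" where
  "connected_graph V E \<longleftrightarrow>
     (\<forall>u\<in>V. \<forall>v\<in>V. \<exists>xs. walk E xs \<and> hd xs = u \<and> last xs = v)"

definition bounded_degree :: "'a set \<Rightarrow> ('a \<Rightarrow> 'a \<Rightarrow> bool) \<Rightarrow> bool" where
  "bounded_degree V E \<longleftrightarrow> (\<exists>D::nat. \<forall>v\<in>V. finite {w. E v w} \<and> card {w. E v w} \<le> D)"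

definition degree :: "('a \<Rightarrow> 'a \<Rightarrow> bool) \<Rightarrow> 'a \<Rightarrow> nat" where
  "degree E v = card {w. E v w}"

definition gdist :: "('a \<Rightarrow> 'a \<Rightarrow> bool) \<Rightarrow> 'a \<Rightarrow> 'a \<Rightarrow> nat" where
  "gdist E u v = (LEAST n. \<exists>xs. walk E xs \<and> hd xs = u \<and> last xs = v \<and> length xs = Suc n)"

text \<open>Regular binary rooted tree: vertices are finite binary words, root is [],
  the children of w are True#w and False#w.  The root has degree 2, all others degree 3.\<close>
definition tree_adj :: "bool list \<Rightarrow> bool list \<Rightarrow> bool" where
  "tree_adj xs ys \<longleftrightarrow> (\<exists>b. ys = b # xs) \<or> (\<exists>b. xs = b # ys)"

text \<open>Probability that simple random walk started at v first returns to v at time n: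
  sum over walks v = x0,...,xn = v avoiding v at intermediate times of
  the product of the transition probabilities 1/deg(x_i).\<close>
definition first_return_walks :: "('a \<Rightarrow> 'a \<Rightarrow> bool) \<Rightarrow> 'a \<Rightarrow> nat \<Rightarrow> 'a list set" where
  "first_return_walks E v n = {xs. walk E xs \<and> length xs = Suc n \<and> hd xs = v \<and> last xs = v \<and>
      (\<forall>i. 0 < i \<and> i < n \<longrightarrow> xs ! i \<noteq> v)}"

definition first_return_prob :: "('a \<Rightarrow> 'a \<Rightarrow> bool) \<Rightarrow> 'a \<Rightarrow> nat \<Rightarrow> real" where
  "first_return_prob E v n =
     (\<Sum>xs\<in>first_return_walks E v n. \<Prod>i<n. 1 / real (degree E (xs ! i)))"

definition return_prob :: "('a \<Rightarrow> 'a \<Rightarrow> bool) \<Rightarrow> 'a \<Rightarrow> ennreal" where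
  "return_prob E v = (\<Sum>n. ennreal (first_return_prob E v (Suc n)))"

definition transient :: "'a set \<Rightarrow> ('a \<Rightarrow> 'a \<Rightarrow> bool) \<Rightarrow> bool" where
  "transient V E \<longleftrightarrow> (\<forall>v\<in>V. return_prob E v < 1)"

end

theory Submission
  imports Defs "HOL-Analysis.Convex"
begin


lemma walk_single[simp]: "walk E [x]" by (simp add: walk_def)

lemma walk_nonempty: "walk E xs \<Longrightarrow> xs \<noteq> []" by (simp add: walk_def)

lemma walk_Cons2: "walk E (x#y#xs) \<longleftrightarrow> E x y \<and> walk E (y#xs)"
proof
  assume h: "walk E (x#y#xs)"
  have "E x y" using h unfolding walk_def by (metis One_nat_def length_Cons less_Suc_eq_0_disj nth_Cons_0 nth_Cons_Suc zero_less_Suc)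
  moreover have "walk E (y#xs)" unfolding walk_def
  proof (intro conjI allI impI)
    fix i assume "Suc i < length (y#xs)"
    then have "Suc (Suc i) < length (x#y#xs)" by simp
    then have "E ((x#y#xs) ! Suc i) ((x#y#xs) ! Suc (Suc i))" using h unfolding walk_def by blast
    then show "E ((y#xs) ! i) ((y#xs) ! Suc i)" by simp
  qed simp
  ultimately show "E x y \<and> walk E (y#xs)" by blast
next
  assume h: "E x y \<and> walk E (y#xs)"
  show "walk E (x#y#xs)" unfolding walk_def
  proof (intro conjI allI impI)
    fix i assume i: "Suc i < length (x#y#xs)"
    show "E ((x#y#xs) ! i) ((x#y#xs) ! Suc i)"
    proof (cases i)
      case 0 then show ?thesis using h by simp
    next
      case (Suc j)
      then have "Suc j < length (y#xs)" using i by simp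
      then have "E ((y#xs) ! j) ((y#xs) ! Suc j)" using h unfolding walk_def by blast
      then show ?thesis using Suc by simp
    qed
  qed simp
qed

lemma walk_ConsD: "walk E (x#xs) \<Longrightarrow> xs \<noteq> [] \<Longrightarrow> E x (hd xs) \<and> walk E xs"
  by (cases xs) (auto simp: walk_Cons2)

lemma walk_append:
  "walk E xs \<Longrightarrow> walk E ys \<Longrightarrow> E (last xs) (hd ys) \<Longrightarrow> walk E (xs @ ys)"
proof (induction xs)
  case Nil then show ?case by (simp add: walk_def)
next
  case (Cons x xs)
  show ?case
  proof (cases xs)
    case Nil
    then show ?thesis using Cons.prems walk_nonempty[of E ys]
      by (cases ys) (auto simp: walk_Cons2)
  next
    case (Cons z zs)
    then have "E x z" "walk E xs" using Cons.prems by (auto simp: walk_Cons2)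
    moreover have "walk E (xs @ ys)" using Cons.IH Cons.prems \<open>walk E xs\<close> \<open>xs = z#zs\<close> by auto
    ultimately show ?thesis using \<open>xs = z#zs\<close> by (simp add: walk_Cons2)
  qed
qed

lemma walk_append_tl:
  assumes "walk E xs" "walk E ys" "last xs = hd ys"
  shows "walk E (xs @ tl ys)"
proof (cases "tl ys")
  case Nil then show ?thesis using assms by simp
next
  case (Cons z zs)
  obtain y where ys: "ys = y # z # zs" using Cons walk_nonempty[OF assms(2)] by (cases ys) auto
  then have "E y z" "walk E (z#zs)" using assms(2) by (auto simp: walk_Cons2)
  then show ?thesis using assms ys walk_append[of E xs "z#zs"] by simp
qed

lemma walk_rev:
  assumes sym: "\<And>x y. E x y \<Longrightarrow> E y x"
  shows "walk E xs \<Longrightarrow> walk E (rev xs)"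
proof (induction xs)
  case Nil then show ?case by (simp add: walk_def)
next
  case (Cons x xs)
  show ?case
  proof (cases xs)
    case Nil then show ?thesis by simp
  next
    case (Cons z zs)
    then have "E x z" "walk E xs" using Cons.prems by (auto simp: walk_Cons2)
    then have "walk E (rev xs)" using Cons.IH by simp
    moreover have "E (last (rev xs)) (hd [x])" using \<open>E x z\<close> sym \<open>xs = z#zs\<close> by (simp add: last_rev)
    ultimately show ?thesis using walk_append[of E "rev xs" "[x]"] by simp
  qed
qed

lemma walk_take: "walk E xs \<Longrightarrow> 0 < n \<Longrightarrow> walk E (take n xs)"
  unfolding walk_def by (auto simp: take_eq_Nil)

lemma walk_snoc: "walk E xs \<Longrightarrow> E (last xs) y \<Longrightarrow> walk E (xs @ [y])"
  using walk_append[of E xs "[y]"] by simp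

definition walks_from :: "('a \<Rightarrow> 'a \<Rightarrow> bool) \<Rightarrow> nat \<Rightarrow> 'a \<Rightarrow> 'a list set" where
  "walks_from E n a = {xs. walk E xs \<and> length xs = Suc n \<and> hd xs = a}"

lemma walks_from_0: "walks_from E 0 a = {[a]}"
  unfolding walks_from_def by (auto simp: length_Suc_conv)

lemma walks_from_Suc:
  "walks_from E (Suc n) a = (\<lambda>(y,xs). a#xs) ` Sigma {w. E a w} (\<lambda>y. walks_from E n y)"
proof
  show "walks_from E (Suc n) a \<subseteq> (\<lambda>(y,xs). a#xs) ` Sigma {w. E a w} (\<lambda>y. walks_from E n y)"
  proof
    fix xs assume "xs \<in> walks_from E (Suc n) a"
    then have h: "walk E xs" "length xs = Suc (Suc n)" "hd xs = a" unfolding walks_from_def by auto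
    then obtain y ys where xs: "xs = a # y # ys" by (cases xs; cases "tl xs") auto
    then have "E a y" "walk E (y#ys)" using h by (auto simp: walk_Cons2)
    then have "(y, y#ys) \<in> Sigma {w. E a w} (\<lambda>y. walks_from E n y)"
      using h xs unfolding walks_from_def by auto
    then show "xs \<in> (\<lambda>(y,xs). a#xs) ` Sigma {w. E a w} (\<lambda>y. walks_from E n y)"
      using xs by force
  qed
next
  show "(\<lambda>(y,xs). a#xs) ` Sigma {w. E a w} (\<lambda>y. walks_from E n y) \<subseteq> walks_from E (Suc n) a"
  proof
    fix zs assume "zs \<in> (\<lambda>(y,xs). a#xs) ` Sigma {w. E a w} (\<lambda>y. walks_from E n y)"
    then obtain y xs where "E a y" "xs \<in> walks_from E n y" "zs = a # xs" by auto
    then show "zs \<in> walks_from E (Suc n) a" unfolding walks_from_def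
      by (cases xs) (auto simp: walk_Cons2)
  qed
qed

lemma walks_from_count:
  assumes deg: "\<And>v. finite {w. E v w} \<and> card {w. E v w} \<le> D"
  shows "finite (walks_from E n a) \<and> card (walks_from E n a) \<le> D ^ n"
proof (induction n arbitrary: a)
  case 0 then show ?case by (simp add: walks_from_0)
next
  case (Suc n)
  have fin: "finite (Sigma {w. E a w} (\<lambda>y. walks_from E n y))"
    using deg Suc.IH by (intro finite_SigmaI) auto
  have "card (walks_from E (Suc n) a) \<le> card (Sigma {w. E a w} (\<lambda>y. walks_from E n y))"
    unfolding walks_from_Suc by (rule card_image_le[OF fin])
  also have "\<dots> = (\<Sum>y\<in>{w. E a w}. card (walks_from E n y))"
    using deg Suc.IH by (intro card_SigmaI) auto
  also have "\<dots> \<le> (\<Sum>y\<in>{w. E a w}. D ^ n)"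
    using Suc.IH by (intro sum_mono) auto
  also have "\<dots> \<le> D * D ^ n" using deg[of a] by simp
  finally show ?case using fin by (simp add: walks_from_Suc)
qed


definition wt :: "('a \<Rightarrow> 'a \<Rightarrow> bool) \<Rightarrow> 'a list \<Rightarrow> real" where
  "wt E xs = (\<Prod>i<length xs - 1. 1 / real (degree E (xs ! i)))"

definition Pw :: "('a \<Rightarrow> 'a \<Rightarrow> bool) \<Rightarrow> 'a \<Rightarrow> nat \<Rightarrow> 'a \<Rightarrow> 'a list set" where
  "Pw E a n x = {xs. walk E xs \<and> length xs = Suc n \<and> hd xs = a \<and> last xs = x}"

definition pr :: "('a \<Rightarrow> 'a \<Rightarrow> bool) \<Rightarrow> 'a \<Rightarrow> nat \<Rightarrow> 'a \<Rightarrow> real" where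
  "pr E a n x = (\<Sum>xs\<in>Pw E a n x. wt E xs)"

lemma wt_nonneg: "wt E xs \<ge> 0"
  unfolding wt_def by (intro prod_nonneg) auto

lemma pr_nonneg: "pr E a n x \<ge> 0"
  unfolding pr_def by (intro sum_nonneg wt_nonneg)

lemma Pw_sub: "Pw E a n x \<subseteq> walks_from E n a"
  unfolding Pw_def walks_from_def by auto

lemma Pw_0: "Pw E a 0 x = (if x = a then {[a]} else {})"
  unfolding Pw_def by (auto simp: length_Suc_conv)

lemma pr_0: "pr E a 0 x = (if x = a then 1 else 0)"
  unfolding pr_def Pw_0 by (simp add: wt_def)

lemma wt_snoc: "xs \<noteq> [] \<Longrightarrow> wt E (xs @ [x]) = wt E xs / real (degree E (last xs))"
proof -
  assume ne: "xs \<noteq> []"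
  then obtain m where m: "length xs = Suc m" by (cases xs) auto
  have "wt E (xs @ [x]) = (\<Prod>i<Suc m. 1 / real (degree E ((xs @ [x]) ! i)))"
    unfolding wt_def using m by simp
  also have "\<dots> = (\<Prod>i<m. 1 / real (degree E (xs ! i))) * (1 / real (degree E (xs ! m)))"
    using m by (simp add: nth_append)
  also have "xs ! m = last xs" using m ne by (simp add: last_conv_nth)
  finally show ?thesis unfolding wt_def using m by simp
qed

lemma prod_lessThan_add:
  fixes h :: "nat \<Rightarrow> real"
  shows "(\<Prod>i<k+m. h i) = (\<Prod>i<k. h i) * (\<Prod>i<m. h (k+i))"
  by (induction m) (auto simp: mult.assoc)

lemma nth_append_tl:
  assumes "length ys = Suc k" "zs \<noteq> []" "last ys = hd zs" "i < length zs"
  shows "(ys @ tl zs) ! (k + i) = zs ! i"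
proof (cases i)
  case 0
  then have "(ys @ tl zs) ! (k + i) = ys ! k" using assms by (simp add: nth_append)
  also have "\<dots> = last ys" using assms last_conv_nth[of ys] by (metis Zero_not_Suc diff_Suc_1 list.size(3))
  also have "\<dots> = zs ! i" using assms 0 by (simp add: hd_conv_nth)
  finally show ?thesis .
next
  case (Suc j)
  then have "(ys @ tl zs) ! (k + i) = tl zs ! j" using assms by (simp add: nth_append)
  also have "\<dots> = zs ! i" using assms Suc by (cases zs) auto
  finally show ?thesis .
qed

lemma wt_append_tl:
  assumes "length ys = Suc k" "zs \<noteq> []" "last ys = hd zs"
  shows "wt E (ys @ tl zs) = wt E ys * wt E zs"
proof -
  obtain m where m: "length zs = Suc m" using assms by (cases zs) auto
  have "wt E (ys @ tl zs) = (\<Prod>i<k+m. 1 / real (degree E ((ys @ tl zs) ! i)))"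
    unfolding wt_def using assms m by simp
  also have "\<dots> = (\<Prod>i<k. 1 / real (degree E ((ys @ tl zs) ! i))) *
                   (\<Prod>i<m. 1 / real (degree E ((ys @ tl zs) ! (k+i))))"
    by (rule prod_lessThan_add)
  also have "(\<Prod>i<k. 1 / real (degree E ((ys @ tl zs) ! i))) = (\<Prod>i<k. 1 / real (degree E (ys ! i)))"
    using assms by (intro prod.cong) (auto simp: nth_append)
  also have "(\<Prod>i<m. 1 / real (degree E ((ys @ tl zs) ! (k+i)))) = (\<Prod>i<m. 1 / real (degree E (zs ! i)))"
    using nth_append_tl[OF assms] m by (intro prod.cong) auto
  finally show ?thesis unfolding wt_def using assms m by simp
qed


context
  fixes E :: "'a \<Rightarrow> 'a \<Rightarrow> bool" and D :: nat
  assumes sym: "\<And>x y. E x y \<Longrightarrow> E y x"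
    and degb: "\<And>v. finite {w. E v w} \<and> card {w. E v w} \<le> D"
begin

lemma Pw_finite: "finite (Pw E a n x)"
proof -
  have "finite (walks_from E n a)" using walks_from_count[where E=E and D=D and n=n and a=a, OF degb] by blast
  then show ?thesis using Pw_sub[of E a n x] by (rule finite_subset[rotated])
qed

lemma Pw_Suc: "Pw E a (Suc n) x = (\<lambda>(y,xs). xs @ [x]) ` Sigma {w. E x w} (\<lambda>y. Pw E a n y)"
proof
  show "Pw E a (Suc n) x \<subseteq> (\<lambda>(y,xs). xs @ [x]) ` Sigma {w. E x w} (\<lambda>y. Pw E a n y)"
  proof
    fix zs assume "zs \<in> Pw E a (Suc n) x"
    then have h: "walk E zs" "length zs = Suc (Suc n)" "hd zs = a" "last zs = x" unfolding Pw_def by auto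
    define ys where "ys = butlast zs"
    have zs: "zs = ys @ [x]" unfolding ys_def using h by (metis append_butlast_last_id list.size(3) nat.distinct(1))
    have ly: "length ys = Suc n" using h zs by simp
    have wy: "walk E ys" using walk_take[OF h(1), of "Suc n"] zs ly by simp
    have hy: "hd ys = a" using h zs ly by (cases ys) auto
    have "E (zs ! n) (zs ! Suc n)" using h unfolding walk_def by auto
    moreover have "zs ! n = last ys"
    proof -
      have "last ys = ys ! (length ys - 1)" by (rule last_conv_nth) (use ly in auto)
      then show ?thesis using zs ly by (simp add: nth_append)
    qed
    moreover have "zs ! Suc n = x" using zs ly by (simp add: nth_append)
    ultimately have "E x (last ys)" using sym[of "last ys" x] by simp
    then have "(last ys, ys) \<in> Sigma {w. E x w} (\<lambda>y. Pw E a n y)"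
      using wy ly hy unfolding Pw_def by auto
    then show "zs \<in> (\<lambda>(y,xs). xs @ [x]) ` Sigma {w. E x w} (\<lambda>y. Pw E a n y)"
      using zs by force
  qed
next
  show "(\<lambda>(y,xs). xs @ [x]) ` Sigma {w. E x w} (\<lambda>y. Pw E a n y) \<subseteq> Pw E a (Suc n) x"
  proof
    fix zs assume "zs \<in> (\<lambda>(y,xs). xs @ [x]) ` Sigma {w. E x w} (\<lambda>y. Pw E a n y)"
    then obtain y ys where h: "E x y" "ys \<in> Pw E a n y" "zs = ys @ [x]" by auto
    then have "walk E ys" "length ys = Suc n" "hd ys = a" "last ys = y" unfolding Pw_def by auto
    moreover have "walk E zs" using walk_snoc[of E ys x] h sym[of x y] \<open>walk E ys\<close> \<open>last ys = y\<close> by simp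
    moreover have "length zs = Suc (Suc n)" "hd zs = a" "last zs = x"
      using h \<open>length ys = Suc n\<close> \<open>hd ys = a\<close> by (cases ys; simp)+
    ultimately show "zs \<in> Pw E a (Suc n) x" unfolding Pw_def by simp
  qed
qed

lemma pr_Suc: "pr E a (Suc n) x = (\<Sum>y\<in>{w. E x w}. pr E a n y / real (degree E y))"
proof -
  have inj: "inj_on (\<lambda>(y,xs). xs @ [x]) (Sigma {w. E x w} (\<lambda>y. Pw E a n y))"
  proof (rule inj_onI)
    fix z z' assume z: "z \<in> Sigma {w. E x w} (\<lambda>y. Pw E a n y)" "z' \<in> Sigma {w. E x w} (\<lambda>y. Pw E a n y)"
      and eq: "(\<lambda>(y,xs). xs @ [x]) z = (\<lambda>(y,xs). xs @ [x]) z'"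
    obtain y ys where zz: "z = (y, ys)" by (cases z)
    obtain y' ys' where zz': "z' = (y', ys')" by (cases z')
    have "ys = ys'" using eq zz zz' by simp
    moreover have "last ys = y" "last ys' = y'" using z zz zz' unfolding Pw_def by auto
    ultimately show "z = z'" using zz zz' by simp
  qed
  have "pr E a (Suc n) x = (\<Sum>z\<in>Sigma {w. E x w} (\<lambda>y. Pw E a n y). wt E ((\<lambda>(y,xs). xs @ [x]) z))"
    unfolding pr_def Pw_Suc by (rule sum.reindex[OF inj, unfolded comp_def])
  also have "\<dots> = (\<Sum>z\<in>Sigma {w. E x w} (\<lambda>y. Pw E a n y). (\<lambda>(y,xs). wt E xs / real (degree E y)) z)"
  proof (rule sum.cong[OF refl], clarsimp)
    fix y ys assume "ys \<in> Pw E a n y"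
    then have "ys \<noteq> []" "last ys = y" unfolding Pw_def by (auto dest: walk_nonempty)
    then show "wt E (ys @ [x]) = wt E ys / real (degree E y)" by (simp add: wt_snoc)
  qed
  also have "\<dots> = (\<Sum>y\<in>{w. E x w}. \<Sum>xs\<in>Pw E a n y. wt E xs / real (degree E y))"
    by (rule sum.Sigma[symmetric]) (use degb Pw_finite in auto)
  also have "\<dots> = (\<Sum>y\<in>{w. E x w}. pr E a n y / real (degree E y))"
    unfolding pr_def by (simp add: sum_divide_distrib)
  finally show ?thesis .
qed

lemma first_return_prob_wt: "first_return_prob E a m = (\<Sum>xs\<in>first_return_walks E a m. wt E xs)"
  unfolding first_return_prob_def wt_def
  by (rule sum.cong[OF refl]) (simp add: first_return_walks_def)

lemma FR_finite: "finite (first_return_walks E a m)"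
proof -
  have "first_return_walks E a m \<subseteq> Pw E a m a" unfolding first_return_walks_def Pw_def by auto
  then show ?thesis using Pw_finite finite_subset by blast
qed


lemma renewal:
  assumes n: "0 < n"
  shows "(\<Sum>k<n. first_return_prob E a (Suc k) * pr E a (n - Suc k) a) \<le> pr E a n a"
proof -
  define FR where "FR k = first_return_walks E a (Suc k)" for k
  define P where "P k = Pw E a (n - Suc k) a" for k
  define Dm where "Dm = Sigma {..<n} (\<lambda>k. FR k \<times> P k)"
  define g where "g = (\<lambda>d::nat \<times> 'a list \<times> 'a list. fst (snd d) @ tl (snd (snd d)))"
  have memD: "walk E ys \<and> length ys = Suc (Suc k) \<and> hd ys = a \<and> last ys = a \<and>
      (\<forall>i. 0 < i \<and> i < Suc k \<longrightarrow> ys ! i \<noteq> a) \<and>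
      walk E zs \<and> length zs = Suc (n - Suc k) \<and> hd zs = a \<and> last zs = a \<and> k < n"
    if "(k, ys, zs) \<in> Dm" for k ys zs
    using that unfolding Dm_def FR_def P_def first_return_walks_def Pw_def by auto
  have finD: "finite Dm" unfolding Dm_def FR_def P_def
    using FR_finite Pw_finite by auto
  have img: "g ` Dm \<subseteq> Pw E a n a"
  proof
    fix xs assume "xs \<in> g ` Dm"
    then obtain k ys zs where d: "(k, ys, zs) \<in> Dm" and xs: "xs = ys @ tl zs" unfolding g_def by auto
    note m = memD[OF d]
    have "walk E xs" using walk_append_tl[of E ys zs] m xs by simp
    moreover have "length xs = Suc n" using m xs by simp
    moreover have "hd xs = a" using m xs by (cases ys) auto
    moreover have "last xs = a"
    proof (cases "tl zs = []")
      case True then show ?thesis using m xs by simp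
    next
      case False
      then have "last (tl zs) = last zs" by (cases zs) auto
      then show ?thesis using m xs False by simp
    qed
    ultimately show "xs \<in> Pw E a n a" unfolding Pw_def by simp
  qed
  have inj: "inj_on g Dm"
  proof (rule inj_onI)
    fix d d' assume dD: "d \<in> Dm" and dD': "d' \<in> Dm" and eq: "g d = g d'"
    obtain k ys zs where d: "d = (k, ys, zs)" by (cases d) auto
    obtain k' ys' zs' where d': "d' = (k', ys', zs')" by (cases d') auto
    note m = memD[OF dD[unfolded d]] and m' = memD[OF dD'[unfolded d']]
    have L: "ys @ tl zs = ys' @ tl zs'" using eq d d' unfolding g_def by simp
    have kk: "k = k'"
    proof (rule ccontr)
      assume "k \<noteq> k'"
      then consider "k < k'" | "k' < k" by linarith
      then show False
      proof cases
        case 1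
        have "(ys @ tl zs) ! Suc k = ys ! Suc k" using m by (simp add: nth_append)
        also have "\<dots> = a" using m last_conv_nth[of ys] by (metis Zero_not_Suc diff_Suc_1 list.size(3))
        finally have "(ys' @ tl zs') ! Suc k = a" using L by simp
        moreover have "(ys' @ tl zs') ! Suc k = ys' ! Suc k" using m' 1 by (simp add: nth_append)
        ultimately show False using m' 1 by auto
      next
        case 2
        have "(ys' @ tl zs') ! Suc k' = ys' ! Suc k'" using m' by (simp add: nth_append)
        also have "\<dots> = a" using m' last_conv_nth[of ys'] by (metis Zero_not_Suc diff_Suc_1 list.size(3))
        finally have "(ys @ tl zs) ! Suc k' = a" using L by simp
        moreover have "(ys @ tl zs) ! Suc k' = ys ! Suc k'" using m 2 by (simp add: nth_append)
        ultimately show False using m 2 by auto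
      qed
    qed
    have "ys = take (Suc (Suc k)) (ys @ tl zs)" using m by simp
    also have "\<dots> = ys'" using L m' kk by simp
    finally have yy: "ys = ys'" .
    then have "tl zs = tl zs'" using L by simp
    moreover have "zs = hd zs # tl zs" "zs' = hd zs' # tl zs'" using m m' by (cases zs; cases zs'; auto)+
    ultimately have "zs = zs'" using m m' by metis
    then show "d = d'" using d d' kk yy by simp
  qed
  have "(\<Sum>k<n. first_return_prob E a (Suc k) * pr E a (n - Suc k) a)
      = (\<Sum>k<n. \<Sum>ys\<in>FR k. \<Sum>zs\<in>P k. wt E ys * wt E zs)"
    unfolding FR_def P_def pr_def by (simp add: sum_product first_return_prob_wt)
  also have "\<dots> = (\<Sum>k<n. \<Sum>p\<in>FR k \<times> P k. wt E (fst p) * wt E (snd p))"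
    by (simp add: sum.cartesian_product split_def)
  also have "\<dots> = (\<Sum>d\<in>Dm. wt E (fst (snd d)) * wt E (snd (snd d)))"
    unfolding Dm_def
    by (subst sum.Sigma) (use FR_finite Pw_finite in \<open>auto simp: FR_def P_def split_def\<close>)
  also have "\<dots> = (\<Sum>d\<in>Dm. wt E (g d))"
  proof (rule sum.cong[OF refl])
    fix d assume dD: "d \<in> Dm"
    obtain k ys zs where d: "d = (k, ys, zs)" by (cases d) auto
    note m = memD[OF dD[unfolded d]]
    show "wt E (fst (snd d)) * wt E (snd (snd d)) = wt E (g d)"
    proof -
      have "zs \<noteq> []" using m by auto
      then show ?thesis unfolding g_def d using wt_append_tl[of ys "Suc k" zs E] m by auto
    qed
  qed
  also have "\<dots> = (\<Sum>xs\<in>g ` Dm. wt E xs)"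
    by (rule sum.reindex[OF inj, symmetric, unfolded comp_def])
  also have "\<dots> \<le> (\<Sum>xs\<in>Pw E a n a. wt E xs)"
    by (rule sum_mono2[OF Pw_finite img]) (rule wt_nonneg)
  finally show ?thesis unfolding pr_def .
qed

end


lemma renewal_ret_lt_1:
  fixes F p :: "nat \<Rightarrow> real" and B :: real
  assumes Fnn: "\<And>k. F k \<ge> 0" and pnn: "\<And>n. p n \<ge> 0" and p0: "p 0 = 1"
    and ren: "\<And>n. 0 < n \<Longrightarrow> (\<Sum>k<n. F (Suc k) * p (n - Suc k)) \<le> p n"
    and bnd: "\<And>N. (\<Sum>n<N. p n) \<le> B"
  shows "(\<Sum>n. ennreal (F (Suc n))) < 1"
proof -
  define S where "S N = (\<Sum>n<N. p n)" for N
  have Smono: "S m \<le> S m'" if "m \<le> m'" for m m'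
    unfolding S_def using that pnn by (intro sum_mono2) auto
  have S0: "S 0 = 0" unfolding S_def by simp
  have SSuc: "S (Suc m) = S m + p m" for m unfolding S_def by simp
  have S1: "S (Suc 0) = 1" unfolding S_def using p0 by simp
  have claim: "1 + (\<Sum>j<M. F (Suc j) * S (M - j)) \<le> S (Suc M)" for M
  proof (induction M)
    case 0 then show ?case using S1 by simp
  next
    case (Suc M)
    have eq1: "(\<Sum>j<Suc M. F (Suc j) * S (Suc M - j))
        = (\<Sum>j<Suc M. F (Suc j) * S (M - j)) + (\<Sum>j<Suc M. F (Suc j) * p (M - j))"
    proof -
      have "(\<Sum>j<Suc M. F (Suc j) * S (Suc M - j)) = (\<Sum>j<Suc M. F (Suc j) * S (M - j) + F (Suc j) * p (M - j))"
      proof (rule sum.cong[OF refl])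
        fix j assume "j \<in> {..<Suc M}"
        then have "Suc M - j = Suc (M - j)" by auto
        then show "F (Suc j) * S (Suc M - j) = F (Suc j) * S (M - j) + F (Suc j) * p (M - j)"
          by (simp add: SSuc distrib_left)
      qed
      then show ?thesis by (simp add: sum.distrib)
    qed
    have eq2: "(\<Sum>j<Suc M. F (Suc j) * S (M - j)) = (\<Sum>j<M. F (Suc j) * S (M - j))"
      by (simp add: S0)
    have r: "(\<Sum>j<Suc M. F (Suc j) * p (M - j)) \<le> p (Suc M)"
      using ren[of "Suc M"] by simp
    show ?case using Suc.IH eq1 eq2 r SSuc[of "Suc M"] by linarith
  qed
  have bdd: "bdd_above (range S)" using bnd unfolding S_def by (intro bdd_aboveI) auto
  define s where "s = (SUP N. S N)"
  have Sle: "S N \<le> s" for N unfolding s_def by (rule cSUP_upper[OF _ bdd]) simp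
  have s1: "1 \<le> s" using Sle[of 1] S1 by simp
  define c where "c K = (\<Sum>k<K. F (Suc k))" for K
  have cnn: "c K \<ge> 0" for K unfolding c_def using Fnn by (intro sum_nonneg) auto
  have key: "1 + c K * S (Suc N) \<le> s" for K N
  proof -
    have "c K * S (Suc N) = (\<Sum>j<K. F (Suc j) * S (Suc N))" unfolding c_def by (simp add: sum_distrib_right)
    also have "\<dots> \<le> (\<Sum>j<K. F (Suc j) * S (N + K - j))"
      by (intro sum_mono mult_left_mono Smono Fnn) auto
    also have "\<dots> \<le> (\<Sum>j<N + K. F (Suc j) * S (N + K - j))"
      using Fnn S0 Smono[of 0] by (intro sum_mono2) (auto intro!: mult_nonneg_nonneg)
    finally have "c K * S (Suc N) \<le> (\<Sum>j<N + K. F (Suc j) * S (N + K - j))" .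
    then show ?thesis using claim[of "N + K"] Sle[of "Suc (N + K)"] by linarith
  qed
  have cbound: "c K \<le> (s - 1) / s" for K
  proof (cases "c K = 0")
    case True then show ?thesis using s1 by simp
  next
    case False
    then have cpos: "c K > 0" using cnn[of K] by simp
    have "S N \<le> (s - 1) / c K" for N
    proof -
      have "S N \<le> S (Suc N)" by (rule Smono) simp
      moreover have "c K * S (Suc N) \<le> s - 1" using key[of K N] by simp
      ultimately have "c K * S N \<le> s - 1" using cpos by (meson mult_left_mono less_imp_le order_trans)
      then show ?thesis using cpos by (simp add: field_simps)
    qed
    then have "s \<le> (s - 1) / c K" unfolding s_def by (intro cSUP_least) auto
    then have "c K * s \<le> s - 1" using cpos by (simp add: field_simps)
    then show ?thesis using s1 by (simp add: field_simps)
  qed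
  have "(\<Sum>n. ennreal (F (Suc n))) \<le> ennreal ((s - 1) / s)"
  proof (rule suminf_le_const)
    show "summable (\<lambda>n. ennreal (F (Suc n)))" by simp
    fix K
    have "(\<Sum>n<K. ennreal (F (Suc n))) = ennreal (c K)" unfolding c_def using Fnn by simp
    then show "(\<Sum>n<K. ennreal (F (Suc n))) \<le> ennreal ((s - 1) / s)"
      using cbound[of K] by (simp add: ennreal_leI)
  qed
  also have "\<dots> < 1"
  proof -
    have "(s - 1) / s < 1" using s1 by (simp add: field_simps)
    moreover have "0 \<le> (s - 1) / s" using s1 by simp
    ultimately show ?thesis by (simp add: ennreal_1[symmetric] ennreal_less_iff del: ennreal_1)
  qed
  finally show ?thesis .
qed


context
  fixes E :: "'a \<Rightarrow> 'a \<Rightarrow> bool" and D :: nat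
  assumes sym: "\<And>x y. E x y \<Longrightarrow> E y x"
    and degb: "\<And>v. finite {w. E v w} \<and> card {w. E v w} \<le> D"
begin

lemma green_bound:
  fixes \<theta> :: "'a \<Rightarrow> 'a \<Rightarrow> real" and K :: real
  assumes anti: "\<And>x y. E x y \<Longrightarrow> \<theta> x y = - \<theta> y x"
    and div: "\<And>x. (\<Sum>y\<in>{w. E x w}. \<theta> x y) = (if x = a then 1 else 0)"
    and en: "\<And>Q. finite Q \<Longrightarrow> Q \<subseteq> {z. E (fst z) (snd z)} \<Longrightarrow> (\<Sum>z\<in>Q. (\<theta> (fst z) (snd z))\<^sup>2) \<le> K"
  shows "(\<Sum>n<N. pr E a n a) \<le> real (degree E a) * K / 2"
proof -
  define w where "w x = (\<Sum>n<N. pr E a n x) / real (degree E x)" for x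
  define A where "A = insert a (last ` (\<Union>n<N. walks_from E n a))"
  have finA: "finite A" unfolding A_def
    using walks_from_count[where E=E and D=D, OF degb] by auto
  have aA: "a \<in> A" unfolding A_def by simp
  have w0: "w x = 0" if "x \<notin> A" for x
  proof -
    have "Pw E a n x = {}" if "n < N" for n
    proof (rule ccontr)
      assume "Pw E a n x \<noteq> {}"
      then obtain xs where "xs \<in> Pw E a n x" by blast
      then have "xs \<in> walks_from E n a" "last xs = x" by (auto simp: Pw_def walks_from_def)
      then have "x \<in> A" unfolding A_def using \<open>n < N\<close> by blast
      then show False using \<open>x \<notin> A\<close> by simp
    qed
    then show ?thesis unfolding w_def pr_def by simp
  qed
  have wnn: "w x \<ge> 0" for x unfolding w_def by (intro divide_nonneg_nonneg sum_nonneg pr_nonneg) auto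
  define NB where "NB x = {y. E x y}" for x
  have finNB: "finite (NB x)" for x unfolding NB_def using degb by blast
  define Q where "Q = {z. E (fst z) (snd z) \<and> (fst z \<in> A \<or> snd z \<in> A)}"
  have SQ: "Sigma A NB \<subseteq> Q" unfolding Q_def NB_def by auto
  have finS: "finite (Sigma A NB)" using finA finNB by auto
  have finQ: "finite Q"
  proof -
    have "Q \<subseteq> Sigma A NB \<union> prod.swap ` Sigma A NB"
    proof
      fix z assume "z \<in> Q"
      then obtain x y where z: "z = (x, y)" "E x y" "x \<in> A \<or> y \<in> A" unfolding Q_def by (cases z) auto
      show "z \<in> Sigma A NB \<union> prod.swap ` Sigma A NB"
      proof (cases "x \<in> A")
        case True then show ?thesis using z unfolding NB_def by auto
      next
        case False
        then have "(y, x) \<in> Sigma A NB" using z sym[of x y] unfolding NB_def by auto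
        then show ?thesis using z by force
      qed
    qed
    then show ?thesis using finS finite_subset by blast
  qed
  have Qsw: "prod.swap z \<in> Q" if "z \<in> Q" for z
    using that sym unfolding Q_def by (cases z) auto
  have QE: "Q \<subseteq> {z. E (fst z) (snd z)}" unfolding Q_def by auto
  have conv: "(\<Sum>x\<in>A. w x * (\<Sum>y\<in>NB x. g x y)) = (\<Sum>z\<in>Q. w (fst z) * g (fst z) (snd z))" for g
  proof -
    have "(\<Sum>x\<in>A. w x * (\<Sum>y\<in>NB x. g x y)) = (\<Sum>x\<in>A. \<Sum>y\<in>NB x. w x * g x y)"
      by (simp add: sum_distrib_left)
    also have "\<dots> = (\<Sum>z\<in>Sigma A NB. w (fst z) * g (fst z) (snd z))"
      by (subst sum.Sigma) (use finA finNB in \<open>auto simp: split_def\<close>)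
    also have "\<dots> = (\<Sum>z\<in>Q. w (fst z) * g (fst z) (snd z))"
    proof (rule sum.mono_neutral_left[OF finQ SQ], rule ballI)
      fix z assume "z \<in> Q - Sigma A NB"
      then have "fst z \<notin> A" unfolding Q_def NB_def by (cases z) auto
      then show "w (fst z) * g (fst z) (snd z) = 0" using w0 by simp
    qed
    finally show ?thesis .
  qed
  have sbp: "(\<Sum>z\<in>Q. w (fst z) * h (fst z) (snd z)) = (1/2) * (\<Sum>z\<in>Q. (w (fst z) - w (snd z)) * h (fst z) (snd z))"
    if hanti: "\<And>z. z \<in> Q \<Longrightarrow> h (snd z) (fst z) = - h (fst z) (snd z)" for h :: "'a \<Rightarrow> 'a \<Rightarrow> real"
  proof -
    have "(\<Sum>z\<in>Q. w (snd z) * h (fst z) (snd z)) = (\<Sum>z\<in>Q. w (fst z) * h (snd z) (fst z))"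
      by (rule sum.reindex_bij_witness[where i=prod.swap and j=prod.swap]) (auto intro: Qsw)
    also have "\<dots> = - (\<Sum>z\<in>Q. w (fst z) * h (fst z) (snd z))"
      using hanti by (simp add: sum_negf[symmetric])
    finally have "(\<Sum>z\<in>Q. w (snd z) * h (fst z) (snd z)) = - (\<Sum>z\<in>Q. w (fst z) * h (fst z) (snd z))" .
    moreover have "(\<Sum>z\<in>Q. (w (fst z) - w (snd z)) * h (fst z) (snd z))
        = (\<Sum>z\<in>Q. w (fst z) * h (fst z) (snd z)) - (\<Sum>z\<in>Q. w (snd z) * h (fst z) (snd z))"
      by (simp add: left_diff_distrib sum_subtractf)
    ultimately show ?thesis by simp
  qed
  have delta: "(\<Sum>x\<in>A. w x * (if x = a then 1 else 0)) = w a"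
  proof -
    have "(\<Sum>x\<in>A. w x * (if x = a then 1 else 0)) = (\<Sum>x\<in>A. if x = a then w x else 0)"
      by (rule sum.cong) auto
    also have "\<dots> = w a" using finA aA by (simp add: sum.delta)
    finally show ?thesis .
  qed
  have E1: "w a = (1/2) * (\<Sum>z\<in>Q. (w (fst z) - w (snd z)) * \<theta> (fst z) (snd z))"
  proof -
    have "w a = (\<Sum>x\<in>A. w x * (\<Sum>y\<in>NB x. \<theta> x y))" unfolding NB_def using div delta by simp
    also have "\<dots> = (\<Sum>z\<in>Q. w (fst z) * \<theta> (fst z) (snd z))" by (rule conv)
    also have "\<dots> = (1/2) * (\<Sum>z\<in>Q. (w (fst z) - w (snd z)) * \<theta> (fst z) (snd z))"
      by (rule sbp) (use QE anti in auto)
    finally show ?thesis .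
  qed
  have loc: "(\<Sum>y\<in>NB x. w x - w y) \<le> (if x = a then 1 else 0)" for x
  proof (cases "card (NB x) = 0")
    case True
    then have "NB x = {}" using finNB by simp
    then show ?thesis by simp
  next
    case False
    have "(\<Sum>y\<in>NB x. w x - w y) = real (card (NB x)) * w x - (\<Sum>y\<in>NB x. w y)"
      by (simp add: sum_subtractf)
    also have "real (card (NB x)) * w x = (\<Sum>n<N. pr E a n x)"
      unfolding w_def NB_def degree_def using False NB_def by simp
    also have "\<dots> \<le> (\<Sum>n<Suc N. pr E a n x)" by (simp add: pr_nonneg)
    also have "\<dots> = pr E a 0 x + (\<Sum>n<N. pr E a (Suc n) x)" by (rule sum.lessThan_Suc_shift)
    also have "(\<Sum>n<N. pr E a (Suc n) x) = (\<Sum>n<N. \<Sum>y\<in>NB x. pr E a n y / real (degree E y))"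
      unfolding NB_def by (simp add: pr_Suc[where E=E and D=D, OF sym degb])
    also have "\<dots> = (\<Sum>y\<in>NB x. w y)"
      unfolding w_def by (subst sum.swap) (simp add: sum_divide_distrib)
    finally show ?thesis by (simp add: pr_0)
  qed
  have E2: "(1/2) * (\<Sum>z\<in>Q. (w (fst z) - w (snd z))\<^sup>2) \<le> w a"
  proof -
    have "(1/2) * (\<Sum>z\<in>Q. (w (fst z) - w (snd z))\<^sup>2)
        = (1/2) * (\<Sum>z\<in>Q. (w (fst z) - w (snd z)) * (w (fst z) - w (snd z)))"
      by (simp add: power2_eq_square)
    also have "\<dots> = (\<Sum>z\<in>Q. w (fst z) * (w (fst z) - w (snd z)))"
      by (rule sbp[symmetric]) simp
    also have "\<dots> = (\<Sum>x\<in>A. w x * (\<Sum>y\<in>NB x. w x - w y))" by (rule conv[symmetric])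
    also have "\<dots> \<le> (\<Sum>x\<in>A. w x * (if x = a then 1 else 0))"
      by (intro sum_mono mult_left_mono loc wnn)
    also have "\<dots> = w a" by (rule delta)
    finally show ?thesis .
  qed
  have CS: "(\<Sum>z\<in>Q. (w (fst z) - w (snd z)) * \<theta> (fst z) (snd z))\<^sup>2
      \<le> (\<Sum>z\<in>Q. (w (fst z) - w (snd z))\<^sup>2) * (\<Sum>z\<in>Q. (\<theta> (fst z) (snd z))\<^sup>2)"
    by (rule Cauchy_Schwarz_ineq_sum)
  have K0: "0 \<le> K" using en[of "{}"] by simp
  have EQ: "(\<Sum>z\<in>Q. (\<theta> (fst z) (snd z))\<^sup>2) \<le> K" by (rule en[OF finQ QE])
  have EQ0: "0 \<le> (\<Sum>z\<in>Q. (\<theta> (fst z) (snd z))\<^sup>2)" by (intro sum_nonneg) auto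
  have waK: "w a \<le> K / 2"
  proof -
    have "(2 * w a)\<^sup>2 \<le> (2 * w a) * K"
    proof -
      have "2 * w a = (\<Sum>z\<in>Q. (w (fst z) - w (snd z)) * \<theta> (fst z) (snd z))" using E1 by simp
      then have "(2 * w a)\<^sup>2 = (\<Sum>z\<in>Q. (w (fst z) - w (snd z)) * \<theta> (fst z) (snd z))\<^sup>2" by simp
      also have "\<dots> \<le> (\<Sum>z\<in>Q. (w (fst z) - w (snd z))\<^sup>2) * (\<Sum>z\<in>Q. (\<theta> (fst z) (snd z))\<^sup>2)" by (rule CS)
      also have "\<dots> \<le> (2 * w a) * K"
        using E2 EQ EQ0 wnn[of a] by (intro mult_mono) auto
      finally show ?thesis .
    qed
    then have "4 * (w a * w a) \<le> 2 * w a * K" by (simp add: power2_eq_square)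
    then show ?thesis using wnn[of a] K0
      by (cases "w a = 0") (auto simp: mult.commute mult.assoc)
  qed
  have dpos: "degree E a > 0"
  proof (rule ccontr)
    assume "\<not> degree E a > 0"
    then have "NB a = {}" using finNB[of a] unfolding degree_def NB_def by simp
    then show False using div[of a] unfolding NB_def by simp
  qed
  have "(\<Sum>n<N. pr E a n a) = real (degree E a) * w a" unfolding w_def using dpos by simp
  also have "\<dots> \<le> real (degree E a) * (K / 2)" using waK by (intro mult_left_mono) auto
  finally show ?thesis by simp
qed

end

lemma flow_transient_at:
  fixes E :: "'a \<Rightarrow> 'a \<Rightarrow> bool" and D :: nat and \<theta> :: "'a \<Rightarrow> 'a \<Rightarrow> real" and K :: real
  assumes sym: "\<And>x y. E x y \<Longrightarrow> E y x"
    and degb: "\<And>v. finite {w. E v w} \<and> card {w. E v w} \<le> D"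
    and anti: "\<And>x y. E x y \<Longrightarrow> \<theta> x y = - \<theta> y x"
    and div: "\<And>x. (\<Sum>y\<in>{w. E x w}. \<theta> x y) = (if x = a then 1 else 0)"
    and en: "\<And>Q. finite Q \<Longrightarrow> Q \<subseteq> {z. E (fst z) (snd z)} \<Longrightarrow> (\<Sum>z\<in>Q. (\<theta> (fst z) (snd z))\<^sup>2) \<le> K"
  shows "return_prob E a < 1"
  unfolding return_prob_def
proof (rule renewal_ret_lt_1[where p = "\<lambda>n. pr E a n a" and B = "real (degree E a) * K / 2"])
  show "\<And>k. first_return_prob E a k \<ge> 0"
    unfolding first_return_prob_def by (intro sum_nonneg prod_nonneg) auto
  show "\<And>n. pr E a n a \<ge> 0" by (rule pr_nonneg)
  show "pr E a 0 a = 1" by (simp add: pr_0)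
  show "\<And>n. 0 < n \<Longrightarrow> (\<Sum>k<n. first_return_prob E a (Suc k) * pr E a (n - Suc k) a) \<le> pr E a n a"
    by (rule renewal[where E=E and D=D, OF sym degb])
  show "\<And>N. (\<Sum>n<N. pr E a n a) \<le> real (degree E a) * K / 2"
    by (rule green_bound[where E=E and D=D, OF sym degb anti div en]) auto
qed


lemma tree_sym: "tree_adj x y \<Longrightarrow> tree_adj y x"
  unfolding tree_adj_def by auto

lemma tree_nbrs: "{w. tree_adj u w} \<subseteq> {True # u, False # u, tl u}"
  unfolding tree_adj_def by auto

lemma tree_degb: "finite {w. tree_adj u w} \<and> card {w. tree_adj u w} \<le> 3"
proof
  show "finite {w. tree_adj u w}" using tree_nbrs finite_subset by blast
  have "card {w. tree_adj u w} \<le> card {True # u, False # u, tl u}"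
    using tree_nbrs by (intro card_mono) auto
  also have "\<dots> \<le> 3" by (simp add: card_insert_if)
  finally show "card {w. tree_adj u w} \<le> 3" .
qed

lemma tree_to_root: "\<exists>xs. walk tree_adj xs \<and> hd xs = u \<and> last xs = []"
proof (induction u)
  case Nil then show ?case by (intro exI[of _ "[[]]"]) simp
next
  case (Cons b u)
  then obtain xs where xs: "walk tree_adj xs" "hd xs = u" "last xs = []" by blast
  then obtain ys where ys: "xs = u # ys" using walk_nonempty by (cases xs) auto
  have "walk tree_adj ((b#u) # xs)" using xs ys by (simp add: walk_Cons2 tree_adj_def)
  then show ?case using xs ys by (intro exI[of _ "(b#u) # xs"]) auto
qed

lemma walk_concat_rev:
  assumes sym: "\<And>x y. E x y \<Longrightarrow> E y x"
    and "walk E xs" "walk E ys" "last xs = last ys"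
  shows "walk E (xs @ tl (rev ys)) \<and> hd (xs @ tl (rev ys)) = hd xs \<and> last (xs @ tl (rev ys)) = hd ys
     \<and> length (xs @ tl (rev ys)) = length xs + length ys - 1"
proof -
  have ne: "xs \<noteq> []" "ys \<noteq> []" using assms(2,3) walk_nonempty by auto
  have w: "walk E (rev ys)" by (rule walk_rev[OF sym assms(3)])
  have "walk E (xs @ tl (rev ys))" using walk_append_tl[OF assms(2) w] assms(4) ne by (simp add: hd_rev)
  moreover have "hd (xs @ tl (rev ys)) = hd xs" using ne by simp
  moreover have "last (xs @ tl (rev ys)) = hd ys"
  proof (cases "tl (rev ys) = []")
    case True
    then have "length ys = 1" using ne by (cases "rev ys") auto
    then have "hd ys = last ys" by (cases ys) auto
    then show ?thesis using True assms(4) by simp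
  next
    case False
    then have "last (tl (rev ys)) = last (rev ys)" by (cases "rev ys") auto
    then show ?thesis using False ne by (simp add: last_rev)
  qed
  moreover have "length (xs @ tl (rev ys)) = length xs + length ys - 1" using ne by (cases ys) auto
  ultimately show ?thesis by blast
qed

lemma tree_conn: "\<exists>xs. walk tree_adj xs \<and> hd xs = u \<and> last xs = v"
proof -
  obtain xs where xs: "walk tree_adj xs" "hd xs = u" "last xs = []" using tree_to_root by blast
  obtain ys where ys: "walk tree_adj ys" "hd ys = v" "last ys = []" using tree_to_root by blast
  have "walk tree_adj (xs @ tl (rev ys)) \<and> hd (xs @ tl (rev ys)) = hd xs \<and> last (xs @ tl (rev ys)) = hd ys"
    using walk_concat_rev[of tree_adj xs ys, OF tree_sym xs(1) ys(1)] xs ys by simp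
  then show ?thesis using xs ys by blast
qed

lemma gdist_le:
  assumes "walk E xs" "hd xs = u" "last xs = v"
  shows "gdist E u v \<le> length xs - 1"
proof -
  have "length xs = Suc (length xs - 1)" using walk_nonempty[OF assms(1)] by (cases xs) auto
  then show ?thesis unfolding gdist_def using assms by (intro Least_le) metis
qed

lemma gdist_ex:
  assumes "\<exists>xs. walk E xs \<and> hd xs = u \<and> last xs = v"
  shows "\<exists>xs. walk E xs \<and> hd xs = u \<and> last xs = v \<and> length xs = Suc (gdist E u v)"
proof -
  obtain xs where xs: "walk E xs" "hd xs = u" "last xs = v" using assms by blast
  have "length xs = Suc (length xs - 1)" using walk_nonempty[OF xs(1)] by (cases xs) auto
  then have "\<exists>n xs. walk E xs \<and> hd xs = u \<and> last xs = v \<and> length xs = Suc n" using xs by blast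
  then show ?thesis unfolding gdist_def by (rule LeastI_ex)
qed

lemma gdist_tree_child: "gdist tree_adj u (b # u) = 1"
proof -
  have w: "walk tree_adj [u, b # u]" by (simp add: walk_Cons2 tree_adj_def)
  have le: "gdist tree_adj u (b # u) \<le> 1" using gdist_le[OF w] by simp
  obtain xs where xs: "walk tree_adj xs" "hd xs = u" "last xs = b # u" "length xs = Suc (gdist tree_adj u (b # u))"
    using gdist_ex[of tree_adj u "b # u"] w by fastforce
  have "gdist tree_adj u (b # u) \<noteq> 0"
  proof
    assume "gdist tree_adj u (b # u) = 0"
    then obtain x where "xs = [x]" using xs(4) by (cases xs) auto
    then show False using xs by simp
  qed
  then show ?thesis using le by simp
qed

fun wflow :: "'a list \<Rightarrow> 'a \<Rightarrow> 'a \<Rightarrow> real" where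
  "wflow (x # y # r) p q = (if p = x \<and> q = y then 1 else 0) - (if p = y \<and> q = x then 1 else 0) + wflow (y # r) p q"
| "wflow _ p q = 0"

lemma wflow_anti0: "wflow xs p q + wflow xs q p = 0"
proof (induction xs p q rule: wflow.induct)
  case (1 x y r p q)
  have e: "(if p = x \<and> q = y then 1 else 0) - (if p = y \<and> q = x then 1 else 0) +
        ((if q = x \<and> p = y then 1 else 0) - (if q = y \<and> p = x then 1 else (0::real))) = 0"
    by (cases "p = x"; cases "q = y"; cases "p = y"; cases "q = x"; simp)
  have "wflow (x # y # r) p q + wflow (x # y # r) q p =
      ((if p = x \<and> q = y then 1 else 0) - (if p = y \<and> q = x then 1 else 0) +
        ((if q = x \<and> p = y then 1 else 0) - (if q = y \<and> p = x then 1 else (0::real))))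
      + (wflow (y # r) p q + wflow (y # r) q p)"
    by (simp only: wflow.simps)
  then show ?case using e "1" by linarith
qed simp_all

lemma wflow_anti: "wflow xs p q = - wflow xs q p"
  using wflow_anti0[of xs p q] by linarith

lemma wflow_supp1: "p \<notin> set xs \<Longrightarrow> wflow xs p q = 0"
  by (induction xs p q rule: wflow.induct) simp_all

lemma wflow_supp2: "q \<notin> set xs \<Longrightarrow> wflow xs p q = 0"
  by (induction xs p q rule: wflow.induct) simp_all

lemma wflow_supp: "wflow xs p q \<noteq> 0 \<Longrightarrow> p \<in> set xs \<and> q \<in> set xs"
  by (metis wflow_supp1 wflow_supp2)

lemma ind_diff_bound: "\<bar>(if A then 1 else 0) - (if B then 1 else 0 :: real)\<bar> \<le> 1"
  by (cases A; cases B) simp_all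

lemma wflow_bound: "\<bar>wflow xs p q\<bar> \<le> real (length xs)"
proof (induction xs p q rule: wflow.induct)
  case (1 x y r p q)
  have d: "\<bar>(if p = x \<and> q = y then 1 else 0) - (if p = y \<and> q = x then 1 else 0 :: real)\<bar> \<le> 1"
    by (rule ind_diff_bound)
  have "\<bar>wflow (x # y # r) p q\<bar> \<le> \<bar>(if p = x \<and> q = y then 1 else 0) - (if p = y \<and> q = x then 1 else 0 :: real)\<bar> + \<bar>wflow (y # r) p q\<bar>"
    unfolding wflow.simps by (rule abs_triangle_ineq)
  moreover have "real (length (x # y # r)) = 1 + real (length (y # r))" by simp
  ultimately show ?case using d "1" by linarith
qed simp_all

lemma wflow_div:
  assumes sym: "\<And>x y. E x y \<Longrightarrow> E y x" and fin: "\<And>v. finite {w. E v w}"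
  shows "walk E xs \<Longrightarrow> (\<Sum>q\<in>{w. E p w}. wflow xs p q) = (if p = hd xs then 1 else 0) - (if p = last xs then 1 else 0)"
proof (induction xs)
  case Nil then show ?case by (simp add: walk_def)
next
  case (Cons x xs)
  show ?case
  proof (cases xs)
    case Nil then show ?thesis by simp
  next
    case (Cons y r)
    have Exy: "E x y" and wr: "walk E (y # r)" using "Cons.prems" Cons by (auto simp: walk_Cons2)
    have IH: "(\<Sum>q\<in>{w. E p w}. wflow (y # r) p q) = (if p = y then 1 else 0) - (if p = last (y # r) then 1 else 0)"
      using "Cons.IH" wr Cons by simp
    have s1: "(\<Sum>q\<in>{w. E p w}. (if p = x \<and> q = y then 1 else 0 :: real)) = (if p = x then 1 else 0)"
    proof (cases "p = x")
      case True
      then have "(\<Sum>q\<in>{w. E p w}. (if p = x \<and> q = y then 1 else 0 :: real)) = (\<Sum>q\<in>{w. E p w}. if q = y then 1 else 0)"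
        by simp
      also have "\<dots> = 1" using fin[of p] Exy True by (simp add: sum.delta)
      finally show ?thesis using True by simp
    qed simp
    have s2: "(\<Sum>q\<in>{w. E p w}. (if p = y \<and> q = x then 1 else 0 :: real)) = (if p = y then 1 else 0)"
    proof (cases "p = y")
      case True
      then have "(\<Sum>q\<in>{w. E p w}. (if p = y \<and> q = x then 1 else 0 :: real)) = (\<Sum>q\<in>{w. E p w}. if q = x then 1 else 0)"
        by simp
      also have "\<dots> = 1" using fin[of p] sym[OF Exy] True by (simp add: sum.delta)
      finally show ?thesis using True by simp
    qed simp
    have "(\<Sum>q\<in>{w. E p w}. wflow (x # y # r) p q)
        = (\<Sum>q\<in>{w. E p w}. (if p = x \<and> q = y then 1 else 0 :: real)) - (\<Sum>q\<in>{w. E p w}. (if p = y \<and> q = x then 1 else 0 :: real))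
          + (\<Sum>q\<in>{w. E p w}. wflow (y # r) p q)"
      by (simp add: sum.distrib sum_subtractf)
    also have "\<dots> = (if p = x then 1 else 0) - (if p = last (y # r) then 1 else 0)"
      using s1 s2 IH by simp
    finally show ?thesis using Cons by simp
  qed
qed


lemma geom_half: "(\<Sum>k\<le>m. (1/2::real) ^ Suc k) = 1 - (1/2) ^ Suc m"
  by (induction m) simp_all

lemma card_bool_lists: "card {u :: bool list. length u = k} = 2 ^ k"
  using card_lists_length_eq[of "UNIV :: bool set" k] by simp

lemma finite_bool_lists: "finite {u :: bool list. length u = k}"
  using finite_lists_length_eq[of "UNIV :: bool set" k] by simp

lemma tree_energy_sum:
  fixes F :: "(bool list \<times> bool) set"
  assumes fin: "finite F"
  shows "(\<Sum>e\<in>F. ((1/2::real) ^ Suc (length (fst e)))\<^sup>2) \<le> 1"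
proof -
  define m where "m = (\<Sum>e\<in>F. length (fst e))"
  define Lm where "Lm = (\<Union>k\<in>{..m}. {u :: bool list. length u = k})"
  define g where "g u = ((1/2::real) ^ Suc (length u))\<^sup>2" for u :: "bool list"
  have finLm: "finite Lm" unfolding Lm_def using finite_bool_lists by auto
  have sub: "F \<subseteq> Lm \<times> UNIV"
  proof
    fix e assume "e \<in> F"
    then have "length (fst e) \<le> m" unfolding m_def using fin by (intro member_le_sum) auto
    then show "e \<in> Lm \<times> UNIV" unfolding Lm_def by (cases e) auto
  qed
  have "(\<Sum>e\<in>F. g (fst e)) \<le> (\<Sum>e\<in>Lm \<times> (UNIV :: bool set). g (fst e))"
  proof (rule sum_mono2)
    show "finite (Lm \<times> (UNIV :: bool set))" using finLm by simp
    show "F \<subseteq> Lm \<times> UNIV" by (rule sub)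
    show "\<And>b. b \<in> Lm \<times> UNIV - F \<Longrightarrow> 0 \<le> g (fst b)" unfolding g_def by simp
  qed
  also have "\<dots> = (\<Sum>u\<in>Lm. \<Sum>b\<in>(UNIV::bool set). g u)"
    by (rule sum.cartesian_product[symmetric, unfolded split_def])
  also have "\<dots> = (\<Sum>u\<in>Lm. 2 * g u)" by (simp add: UNIV_bool)
  also have "\<dots> = (\<Sum>k\<in>{..m}. \<Sum>u\<in>{u :: bool list. length u = k}. 2 * g u)"
    unfolding Lm_def by (rule sum.UNION_disjoint) (auto simp: finite_bool_lists)
  also have "\<dots> = (\<Sum>k\<in>{..m}. (1/2) ^ Suc k)"
  proof (rule sum.cong[OF refl])
    fix k assume "k \<in> {..m}"
    have "(\<Sum>u\<in>{u :: bool list. length u = k}. 2 * g u) = (\<Sum>u\<in>{u :: bool list. length u = k}. 2 * ((1/2::real) ^ Suc k)\<^sup>2)"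
      unfolding g_def by (rule sum.cong) auto
    also have "\<dots> = 2 ^ k * (2 * ((1/2::real) ^ Suc k)\<^sup>2)" by (simp add: card_bool_lists)
    also have "\<dots> = (1/2) ^ Suc k" by (simp add: power2_eq_square power_mult_distrib[symmetric] field_simps)
    finally show "(\<Sum>u\<in>{u :: bool list. length u = k}. 2 * g u) = (1/2) ^ Suc k" .
  qed
  also have "\<dots> \<le> 1" using geom_half[of m] by simp
  finally show ?thesis unfolding g_def .
qed


lemma nat_le_ceil: "real n \<le> x \<Longrightarrow> n \<le> nat \<lceil>x\<rceil>"
  by linarith

lemma take_walk_to:
  assumes "walk E xs" "i < length xs"
  shows "walk E (take (Suc i) xs) \<and> hd (take (Suc i) xs) = hd xs \<and> last (take (Suc i) xs) = xs ! i
    \<and> length (take (Suc i) xs) \<le> length xs"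
proof -
  have ne: "xs \<noteq> []" using assms by auto
  have "walk E (take (Suc i) xs)" using walk_take[OF assms(1)] by simp
  moreover have "hd (take (Suc i) xs) = hd xs" using ne by (cases xs) auto
  moreover have "last (take (Suc i) xs) = xs ! i"
    using assms by (simp add: take_Suc_conv_app_nth)
  ultimately show ?thesis by simp
qed

context
  fixes V :: "'a set" and E :: "'a \<Rightarrow> 'a \<Rightarrow> bool" and f :: "bool list \<Rightarrow> 'a" and C :: real and D :: nat
  assumes sg: "simple_graph V E"
    and conn: "connected_graph V E"
    and degb: "\<And>v. finite {w. E v w} \<and> card {w. E v w} \<le> D"
    and fV: "\<And>u. f u \<in> V"
    and Cpos: "C > 0"
    and qi: "\<And>u v. real (gdist tree_adj u v) / C - C \<le> real (gdist E (f u) (f v))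
              \<and> real (gdist E (f u) (f v)) \<le> C * real (gdist tree_adj u v) + C"
begin

lemma symE: "E x y \<Longrightarrow> E y x"
  using sg unfolding simple_graph_def by blast

lemma connw: "x \<in> V \<Longrightarrow> y \<in> V \<Longrightarrow> \<exists>xs. walk E xs \<and> hd xs = x \<and> last xs = y"
  using conn unfolding connected_graph_def by blast

definition LL :: nat where "LL = nat \<lceil>2 * C\<rceil>"

definition path :: "bool list \<Rightarrow> bool \<Rightarrow> 'a list" where
  "path u b = (SOME xs. walk E xs \<and> hd xs = f u \<and> last xs = f (b # u) \<and> length xs \<le> Suc LL)"

lemma path_ex: "\<exists>xs. walk E xs \<and> hd xs = f u \<and> last xs = f (b # u) \<and> length xs \<le> Suc LL"
proof -
  obtain xs where xs: "walk E xs" "hd xs = f u" "last xs = f (b # u)" "length xs = Suc (gdist E (f u) (f (b # u)))"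
    using gdist_ex[OF connw[OF fV fV]] by blast
  have "real (gdist E (f u) (f (b # u))) \<le> C * 1 + C" using qi[of u "b # u"] gdist_tree_child[of u b] by simp
  then have "gdist E (f u) (f (b # u)) \<le> LL" unfolding LL_def by (intro nat_le_ceil) simp
  then show ?thesis using xs by (intro exI[of _ xs]) simp
qed

lemma path_prop: "walk E (path u b) \<and> hd (path u b) = f u \<and> last (path u b) = f (b # u) \<and> length (path u b) \<le> Suc LL"
  unfolding path_def by (rule someI_ex[OF path_ex])

lemma path_ne: "path u b \<noteq> []"
  using path_prop walk_nonempty by blast

definition TT :: "'a \<Rightarrow> (bool list \<times> bool) set" where
  "TT p = {e. p \<in> set (path (fst e) (snd e))}"

definition RR :: nat where "RR = nat \<lceil>C * (2 * real LL + C)\<rceil>"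

lemma walk_to_p:
  assumes "e \<in> TT p"
  obtains xs where "walk E xs" "hd xs = f (fst e)" "last xs = p" "length xs \<le> Suc LL"
proof -
  let ?\<pi> = "path (fst e) (snd e)"
  obtain i where i: "i < length ?\<pi>" "?\<pi> ! i = p" using assms unfolding TT_def by (auto simp: in_set_conv_nth)
  have pp: "walk E ?\<pi>" "hd ?\<pi> = f (fst e)" "length ?\<pi> \<le> Suc LL" using path_prop by auto
  show ?thesis using take_walk_to[OF pp(1) i(1)] i pp by (intro that[of "take (Suc i) ?\<pi>"]) auto
qed

lemma close:
  assumes "e \<in> TT p" "e' \<in> TT p"
  shows "gdist tree_adj (fst e') (fst e) \<le> RR"
proof -
  obtain xs where xs: "walk E xs" "hd xs = f (fst e)" "last xs = p" "length xs \<le> Suc LL"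
    using walk_to_p[OF assms(1)] by blast
  obtain ys where ys: "walk E ys" "hd ys = f (fst e')" "last ys = p" "length ys \<le> Suc LL"
    using walk_to_p[OF assms(2)] by blast
  have c: "walk E (ys @ tl (rev xs)) \<and> hd (ys @ tl (rev xs)) = hd ys \<and> last (ys @ tl (rev xs)) = hd xs
     \<and> length (ys @ tl (rev xs)) = length ys + length xs - 1"
    using walk_concat_rev[of E ys xs, OF symE ys(1) xs(1)] xs(3) ys(3) by simp
  have "gdist E (f (fst e')) (f (fst e)) \<le> length (ys @ tl (rev xs)) - 1"
    using gdist_le[of E "ys @ tl (rev xs)"] c xs ys by simp
  also have "\<dots> \<le> 2 * LL" using c xs ys by simp
  finally have g: "real (gdist E (f (fst e')) (f (fst e))) \<le> 2 * real LL" by linarith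
  have "real (gdist tree_adj (fst e') (fst e)) / C - C \<le> 2 * real LL" using qi[of "fst e'" "fst e"] g by linarith
  then have "real (gdist tree_adj (fst e') (fst e)) \<le> C * (2 * real LL + C)"
    using Cpos by (simp add: field_simps)
  then show ?thesis unfolding RR_def by (rule nat_le_ceil)
qed

definition TWs :: "bool list \<Rightarrow> bool list list set" where
  "TWs u0 = (\<Union>k\<in>{..RR}. walks_from tree_adj k u0)"

definition MM :: nat where "MM = 2 * (\<Sum>k\<le>RR. 3 ^ k)"

lemma TWs_fin_card: "finite (TWs u0) \<and> card (TWs u0) \<le> (\<Sum>k\<le>RR. 3 ^ k)"
proof
  show "finite (TWs u0)" unfolding TWs_def using walks_from_count[OF tree_degb] by auto
  have "card (TWs u0) \<le> (\<Sum>k\<le>RR. card (walks_from tree_adj k u0))"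
    unfolding TWs_def by (rule card_UN_le) simp
  also have "\<dots> \<le> (\<Sum>k\<le>RR. 3 ^ k)"
    using walks_from_count[OF tree_degb] by (intro sum_mono) auto
  finally show "card (TWs u0) \<le> (\<Sum>k\<le>RR. 3 ^ k)" .
qed

lemma TT_sub:
  assumes e0: "e0 \<in> TT p"
  shows "TT p \<subseteq> (\<lambda>z. (last (fst z), snd z)) ` (TWs (fst e0) \<times> (UNIV :: bool set))"
proof
  fix e assume e: "e \<in> TT p"
  have g: "gdist tree_adj (fst e0) (fst e) \<le> RR" by (rule close[OF e e0])
  obtain xs where xs: "walk tree_adj xs" "hd xs = fst e0" "last xs = fst e"
      "length xs = Suc (gdist tree_adj (fst e0) (fst e))"
    using gdist_ex[OF tree_conn] by blast
  have "xs \<in> TWs (fst e0)" unfolding TWs_def walks_from_def using xs g by auto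
  then show "e \<in> (\<lambda>z. (last (fst z), snd z)) ` (TWs (fst e0) \<times> (UNIV :: bool set))"
    using xs by (intro image_eqI[of _ _ "(xs, snd e)"]) auto
qed

lemma TT_fin_card: "finite (TT p) \<and> card (TT p) \<le> MM"
proof (cases "TT p = {}")
  case True then show ?thesis by simp
next
  case False
  then obtain e0 where e0: "e0 \<in> TT p" by blast
  have fin: "finite (TWs (fst e0) \<times> (UNIV :: bool set))" using TWs_fin_card by simp
  have "card (TT p) \<le> card ((\<lambda>z. (last (fst z), snd z)) ` (TWs (fst e0) \<times> (UNIV :: bool set)))"
    by (rule card_mono[OF finite_imageI[OF fin] TT_sub[OF e0]])
  also have "\<dots> \<le> card (TWs (fst e0) \<times> (UNIV :: bool set))" by (rule card_image_le[OF fin])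
  also have "\<dots> = card (TWs (fst e0)) * 2" by (simp add: card_cartesian_product)
  also have "\<dots> \<le> MM" unfolding MM_def using TWs_fin_card[of "fst e0"] by simp
  finally show ?thesis using finite_subset[OF TT_sub[OF e0] finite_imageI[OF fin]] by simp
qed


definition ce :: "bool list \<times> bool \<Rightarrow> real" where
  "ce e = (1/2) ^ Suc (length (fst e))"

definition Th :: "'a \<Rightarrow> 'a \<Rightarrow> real" where
  "Th p q = (\<Sum>e\<in>TT p. ce e * wflow (path (fst e) (snd e)) p q)"

lemma Th_restrict: "Th p q = (\<Sum>e\<in>TT p \<inter> TT q. ce e * wflow (path (fst e) (snd e)) p q)"
  unfolding Th_def
proof (rule sum.mono_neutral_right)
  show "finite (TT p)" using TT_fin_card by blast
  show "TT p \<inter> TT q \<subseteq> TT p" by blast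
  show "\<forall>e\<in>TT p - TT p \<inter> TT q. ce e * wflow (path (fst e) (snd e)) p q = 0"
    unfolding TT_def by (auto simp: wflow_supp2)
qed

lemma Th_anti: "Th p q = - Th q p"
proof -
  have "Th q p = (\<Sum>e\<in>TT q \<inter> TT p. ce e * wflow (path (fst e) (snd e)) q p)" by (rule Th_restrict)
  also have "\<dots> = (\<Sum>e\<in>TT p \<inter> TT q. - (ce e * wflow (path (fst e) (snd e)) p q))"
    by (rule sum.cong) (auto simp: Int_commute wflow_anti[of _ q p])
  also have "\<dots> = - Th p q" by (simp add: Th_restrict sum_negf)
  finally show ?thesis by simp
qed

lemma Th_div: "(\<Sum>q\<in>{w. E p w}. Th p q) = (if p = f [] then 1 else 0)"
proof -
  have finT: "finite (TT p)" using TT_fin_card by blast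
  define U where "U = {u. f u = p}"
  have UT: "U \<times> (UNIV :: bool set) \<subseteq> TT p" unfolding U_def TT_def
  proof (rule subsetI)
    fix e :: "bool list \<times> bool" assume "e \<in> {u. f u = p} \<times> UNIV"
    then have "hd (path (fst e) (snd e)) = p" using path_prop by auto
    then show "e \<in> {e. p \<in> set (path (fst e) (snd e))}" using path_ne hd_in_set by fastforce
  qed
  have finU: "finite U"
    using finite_subset[OF UT finT] finite_cartesian_productD1[of U "UNIV :: bool set"] by simp
  define W where "W = {e :: bool list \<times> bool. f (snd e # fst e) = p}"
  have WT: "W \<subseteq> TT p" unfolding W_def TT_def
  proof (rule subsetI)
    fix e :: "bool list \<times> bool" assume "e \<in> {e :: bool list \<times> bool. f (snd e # fst e) = p}"
    then have "last (path (fst e) (snd e)) = p" using path_prop by auto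
    then show "e \<in> {e. p \<in> set (path (fst e) (snd e))}" using path_ne last_in_set by fastforce
  qed
  have "(\<Sum>q\<in>{w. E p w}. Th p q) = (\<Sum>e\<in>TT p. ce e * (\<Sum>q\<in>{w. E p w}. wflow (path (fst e) (snd e)) p q))"
    unfolding Th_def by (subst sum.swap) (simp add: sum_distrib_left)
  also have "\<dots> = (\<Sum>e\<in>TT p. ce e * ((if p = f (fst e) then 1 else 0) - (if p = f (snd e # fst e) then 1 else 0)))"
  proof (rule sum.cong[OF refl])
    fix e
    have "(\<Sum>q\<in>{w. E p w}. wflow (path (fst e) (snd e)) p q)
        = (if p = hd (path (fst e) (snd e)) then 1 else 0) - (if p = last (path (fst e) (snd e)) then 1 else 0)"
      by (rule wflow_div[OF symE]) (use degb path_prop in auto)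
    then show "ce e * (\<Sum>q\<in>{w. E p w}. wflow (path (fst e) (snd e)) p q)
        = ce e * ((if p = f (fst e) then 1 else 0) - (if p = f (snd e # fst e) then 1 else 0))"
      using path_prop by simp
  qed
  also have "\<dots> = (\<Sum>e\<in>TT p. if p = f (fst e) then ce e else 0) - (\<Sum>e\<in>TT p. if p = f (snd e # fst e) then ce e else 0)"
    by (simp only: sum_subtractf[symmetric]) (rule sum.cong, auto)
  also have "(\<Sum>e\<in>TT p. if p = f (fst e) then ce e else 0) = (\<Sum>e\<in>U \<times> (UNIV :: bool set). ce e)"
  proof -
    have "(\<Sum>e\<in>TT p. if p = f (fst e) then ce e else 0) = (\<Sum>e\<in>{e\<in>TT p. p = f (fst e)}. ce e)"
      by (rule sum.inter_filter[OF finT, symmetric])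
    also have "{e\<in>TT p. p = f (fst e)} = U \<times> UNIV" using UT unfolding U_def by auto
    finally show ?thesis .
  qed
  also have "(\<Sum>e\<in>U \<times> (UNIV :: bool set). ce e) = (\<Sum>u\<in>U. (1/2) ^ length u)"
  proof -
    have "(\<Sum>e\<in>U \<times> (UNIV :: bool set). ce e) = (\<Sum>u\<in>U. \<Sum>b\<in>(UNIV :: bool set). ce (u, b))"
      by (simp add: sum.cartesian_product)
    also have "\<dots> = (\<Sum>u\<in>U. (1/2) ^ length u)" by (simp add: UNIV_bool ce_def)
    finally show ?thesis .
  qed
  also have "(\<Sum>e\<in>TT p. if p = f (snd e # fst e) then ce e else 0) = (\<Sum>u\<in>U - {[]}. (1/2) ^ length u)"
  proof -
    have "(\<Sum>e\<in>TT p. if p = f (snd e # fst e) then ce e else 0) = (\<Sum>e\<in>{e\<in>TT p. p = f (snd e # fst e)}. ce e)"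
      by (rule sum.inter_filter[OF finT, symmetric])
    also have "{e\<in>TT p. p = f (snd e # fst e)} = W" using WT unfolding W_def by auto
    also have "(\<Sum>e\<in>W. ce e) = (\<Sum>u\<in>U - {[]}. (1/2) ^ length u)"
    proof (rule sum.reindex_bij_witness[where i = "\<lambda>w. (tl w, hd w)" and j = "\<lambda>e. snd e # fst e"])
      show "\<And>a. a \<in> W \<Longrightarrow> (tl (snd a # fst a), hd (snd a # fst a)) = a" by auto
      show "\<And>a. a \<in> W \<Longrightarrow> snd a # fst a \<in> U - {[]}" unfolding W_def U_def by auto
      show "\<And>b. b \<in> U - {[]} \<Longrightarrow> snd (tl b, hd b) # fst (tl b, hd b) = b" by auto
      show "\<And>b. b \<in> U - {[]} \<Longrightarrow> (tl b, hd b) \<in> W" unfolding W_def U_def by auto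
      show "\<And>a. a \<in> W \<Longrightarrow> (1/2) ^ length (snd a # fst a) = ce a" unfolding ce_def by simp
    qed
    finally show ?thesis .
  qed
  also have "(\<Sum>u\<in>U. (1/2::real) ^ length u) - (\<Sum>u\<in>U - {[]}. (1/2) ^ length u) = (if p = f [] then 1 else 0)"
    using finU by (simp add: sum_diff1 U_def)
  finally show ?thesis .
qed


lemma Th_sq: "(Th p q)\<^sup>2 \<le> real MM * (real (Suc LL))\<^sup>2 * (\<Sum>e\<in>TT p. (ce e)\<^sup>2)"
proof -
  let ?Lr = "real (Suc LL)"
  have "(Th p q)\<^sup>2 \<le> (\<Sum>e\<in>TT p. (ce e * wflow (path (fst e) (snd e)) p q)\<^sup>2) * real (card (TT p))"
    unfolding Th_def by (rule sum_squared_le_sum_of_squares)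
  also have "\<dots> \<le> (\<Sum>e\<in>TT p. (ce e)\<^sup>2 * ?Lr\<^sup>2) * real MM"
  proof (rule mult_mono)
    show "(\<Sum>e\<in>TT p. (ce e * wflow (path (fst e) (snd e)) p q)\<^sup>2) \<le> (\<Sum>e\<in>TT p. (ce e)\<^sup>2 * ?Lr\<^sup>2)"
    proof (rule sum_mono)
      fix e
      have "\<bar>wflow (path (fst e) (snd e)) p q\<bar> \<le> ?Lr"
        using wflow_bound[of "path (fst e) (snd e)" p q] path_prop[of "fst e" "snd e"] by linarith
      then have "(wflow (path (fst e) (snd e)) p q)\<^sup>2 \<le> ?Lr\<^sup>2"
        by (simp add: abs_le_square_iff[symmetric])
      then show "(ce e * wflow (path (fst e) (snd e)) p q)\<^sup>2 \<le> (ce e)\<^sup>2 * ?Lr\<^sup>2"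
        by (simp add: power_mult_distrib mult_left_mono)
    qed
    show "real (card (TT p)) \<le> real MM" using TT_fin_card by simp
  qed (auto intro: sum_nonneg)
  also have "\<dots> = real MM * ?Lr\<^sup>2 * (\<Sum>e\<in>TT p. (ce e)\<^sup>2)"
    by (simp add: sum_distrib_right[symmetric] mult_ac)
  finally show ?thesis .
qed

lemma Th_energy:
  assumes finQ: "finite Q" and QE: "Q \<subseteq> {z. E (fst z) (snd z)}"
  shows "(\<Sum>z\<in>Q. (Th (fst z) (snd z))\<^sup>2) \<le> real MM * (real (Suc LL))\<^sup>2 * real (Suc LL * D)"
proof -
  let ?c = "real MM * (real (Suc LL))\<^sup>2"
  define TU where "TU = (\<Union>z\<in>Q. TT (fst z))"
  have finTU: "finite TU" unfolding TU_def using finQ TT_fin_card by blast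
  have step1: "(\<Sum>z\<in>Q. (Th (fst z) (snd z))\<^sup>2) \<le> ?c * (\<Sum>z\<in>Q. \<Sum>e\<in>TT (fst z). (ce e)\<^sup>2)"
  proof -
    have "(\<Sum>z\<in>Q. (Th (fst z) (snd z))\<^sup>2) \<le> (\<Sum>z\<in>Q. ?c * (\<Sum>e\<in>TT (fst z). (ce e)\<^sup>2))"
      by (intro sum_mono Th_sq)
    also have "\<dots> = ?c * (\<Sum>z\<in>Q. \<Sum>e\<in>TT (fst z). (ce e)\<^sup>2)" by (simp add: sum_distrib_left)
    finally show ?thesis .
  qed
  have "(\<Sum>z\<in>Q. \<Sum>e\<in>TT (fst z). (ce e)\<^sup>2) = (\<Sum>z\<in>Q. \<Sum>e\<in>{e. e \<in> TU \<and> e \<in> TT (fst z)}. (ce e)\<^sup>2)"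
    by (rule sum.cong[OF refl], rule sum.cong) (auto simp: TU_def)
  also have "\<dots> = (\<Sum>e\<in>TU. \<Sum>z\<in>{z. z \<in> Q \<and> e \<in> TT (fst z)}. (ce e)\<^sup>2)"
    by (rule sum.swap_restrict[OF finQ finTU])
  also have "\<dots> \<le> (\<Sum>e\<in>TU. (ce e)\<^sup>2 * real (Suc LL * D))"
  proof (rule sum_mono)
    fix e assume "e \<in> TU"
    let ?\<pi> = "path (fst e) (snd e)"
    have sub: "{z. z \<in> Q \<and> e \<in> TT (fst z)} \<subseteq> Sigma (set ?\<pi>) (\<lambda>p. {w. E p w})"
      using QE unfolding TT_def by auto
    have finS: "finite (Sigma (set ?\<pi>) (\<lambda>p. {w. E p w}))" using degb by auto
    have "card {z. z \<in> Q \<and> e \<in> TT (fst z)} \<le> card (Sigma (set ?\<pi>) (\<lambda>p. {w. E p w}))"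
      by (rule card_mono[OF finS sub])
    also have "\<dots> = (\<Sum>p\<in>set ?\<pi>. card {w. E p w})" using degb by (intro card_SigmaI) auto
    also have "\<dots> \<le> card (set ?\<pi>) * D" using sum_bounded_above[of "set ?\<pi>" "\<lambda>p. card {w. E p w}" D] degb by simp
    also have "\<dots> \<le> length ?\<pi> * D" by (intro mult_right_mono card_length) simp
    also have "\<dots> \<le> Suc LL * D" using path_prop by (intro mult_right_mono) auto
    finally have "card {z. z \<in> Q \<and> e \<in> TT (fst z)} \<le> Suc LL * D" .
    then have "real (card {z. z \<in> Q \<and> e \<in> TT (fst z)}) \<le> real (Suc LL * D)" by (rule of_nat_mono)
    then have "(ce e)\<^sup>2 * real (card {z. z \<in> Q \<and> e \<in> TT (fst z)}) \<le> (ce e)\<^sup>2 * real (Suc LL * D)"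
      by (rule mult_left_mono) simp
    then show "(\<Sum>z\<in>{z. z \<in> Q \<and> e \<in> TT (fst z)}. (ce e)\<^sup>2) \<le> (ce e)\<^sup>2 * real (Suc LL * D)"
      by (simp only: sum_constant) (simp add: mult.commute)
  qed
  also have "\<dots> = real (Suc LL * D) * (\<Sum>e\<in>TU. (ce e)\<^sup>2)" by (simp only: sum_distrib_right[symmetric]) (rule mult.commute)
  also have "\<dots> \<le> real (Suc LL * D) * 1"
    using tree_energy_sum[OF finTU] unfolding ce_def by (intro mult_left_mono) auto
  finally have "(\<Sum>z\<in>Q. \<Sum>e\<in>TT (fst z). (ce e)\<^sup>2) \<le> real (Suc LL * D)" by simp
  then have "?c * (\<Sum>z\<in>Q. \<Sum>e\<in>TT (fst z). (ce e)\<^sup>2) \<le> ?c * real (Suc LL * D)"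
    by (intro mult_left_mono) auto
  then show ?thesis using step1 by linarith
qed


lemma sq_sum_le: "((a::real) + b)\<^sup>2 \<le> 2 * a\<^sup>2 + 2 * b\<^sup>2"
proof -
  have "2 * a\<^sup>2 + 2 * b\<^sup>2 - (a + b)\<^sup>2 = (a - b)\<^sup>2" by (simp add: power2_eq_square algebra_simps)
  moreover have "0 \<le> (a - b)\<^sup>2" by simp
  ultimately show ?thesis by linarith
qed

lemma ret_lt:
  assumes v: "v \<in> V"
  shows "return_prob E v < 1"
proof -
  obtain \<rho> where \<rho>: "walk E \<rho>" "hd \<rho> = v" "last \<rho> = f []" using connw[OF v fV] by blast
  define \<theta> where "\<theta> p q = Th p q + wflow \<rho> p q" for p q
  define S\<rho> where "S\<rho> = Sigma (set \<rho>) (\<lambda>p. {w. E p w})"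
  have finS: "finite S\<rho>" unfolding S\<rho>_def using degb by auto
  define K where "K = 2 * (real MM * (real (Suc LL))\<^sup>2 * real (Suc LL * D)) + 2 * (\<Sum>z\<in>S\<rho>. (wflow \<rho> (fst z) (snd z))\<^sup>2)"
  show ?thesis
  proof (rule flow_transient_at[where E=E and D=D and \<theta>=\<theta> and K=K, OF symE degb])
    show "\<And>x y. E x y \<Longrightarrow> \<theta> x y = - \<theta> y x"
      unfolding \<theta>_def using Th_anti wflow_anti by (metis minus_add_distrib)
    show "(\<Sum>y\<in>{w. E x w}. \<theta> x y) = (if x = v then 1 else 0)" for x
    proof -
      have "(\<Sum>y\<in>{w. E x w}. \<theta> x y) = (\<Sum>y\<in>{w. E x w}. Th x y) + (\<Sum>y\<in>{w. E x w}. wflow \<rho> x y)"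
        unfolding \<theta>_def by (rule sum.distrib)
      also have "(\<Sum>y\<in>{w. E x w}. wflow \<rho> x y) = (if x = hd \<rho> then 1 else 0) - (if x = last \<rho> then 1 else 0)"
        by (rule wflow_div[OF symE]) (use degb \<rho> in auto)
      finally show ?thesis using Th_div[of x] \<rho> by simp
    qed
    show "(\<Sum>z\<in>Q. (\<theta> (fst z) (snd z))\<^sup>2) \<le> K" if finQ: "finite Q" and QE: "Q \<subseteq> {z. E (fst z) (snd z)}" for Q
    proof -
      have "(\<Sum>z\<in>Q. (\<theta> (fst z) (snd z))\<^sup>2) \<le> (\<Sum>z\<in>Q. 2 * (Th (fst z) (snd z))\<^sup>2 + 2 * (wflow \<rho> (fst z) (snd z))\<^sup>2)"
        unfolding \<theta>_def by (intro sum_mono sq_sum_le)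
      also have "\<dots> = 2 * (\<Sum>z\<in>Q. (Th (fst z) (snd z))\<^sup>2) + 2 * (\<Sum>z\<in>Q. (wflow \<rho> (fst z) (snd z))\<^sup>2)"
        by (simp add: sum.distrib sum_distrib_left)
      also have "(\<Sum>z\<in>Q. (wflow \<rho> (fst z) (snd z))\<^sup>2) \<le> (\<Sum>z\<in>S\<rho>. (wflow \<rho> (fst z) (snd z))\<^sup>2)"
      proof -
        have "(\<Sum>z\<in>Q. (wflow \<rho> (fst z) (snd z))\<^sup>2) = (\<Sum>z\<in>Q \<inter> S\<rho>. (wflow \<rho> (fst z) (snd z))\<^sup>2)"
        proof (rule sum.mono_neutral_right[OF finQ])
          show "Q \<inter> S\<rho> \<subseteq> Q" by blast
          show "\<forall>z\<in>Q - Q \<inter> S\<rho>. (wflow \<rho> (fst z) (snd z))\<^sup>2 = 0"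
          proof
            fix z assume z: "z \<in> Q - Q \<inter> S\<rho>"
            then have "fst z \<notin> set \<rho>" using QE unfolding S\<rho>_def by (cases z) auto
            then show "(wflow \<rho> (fst z) (snd z))\<^sup>2 = 0" by (simp add: wflow_supp1)
          qed
        qed
        also have "\<dots> \<le> (\<Sum>z\<in>S\<rho>. (wflow \<rho> (fst z) (snd z))\<^sup>2)"
          by (rule sum_mono2[OF finS]) auto
        finally show ?thesis .
      qed
      also have "(\<Sum>z\<in>Q. (Th (fst z) (snd z))\<^sup>2) \<le> real MM * (real (Suc LL))\<^sup>2 * real (Suc LL * D)"
        by (rule Th_energy[OF finQ QE])
      finally show ?thesis unfolding K_def by simp
    qed
  qed
qed

end

theorem transient_main:
  fixes V :: "'a set" and E :: "'a \<Rightarrow> 'a \<Rightarrow> bool"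
    and f :: "bool list \<Rightarrow> 'a" and C :: real
  assumes "simple_graph V E"
    and "connected_graph V E"
    and "bounded_degree V E"
    and "\<forall>u. f u \<in> V"
    and "C > 0"
    and "\<forall>u v. real (gdist tree_adj u v) / C - C \<le> real (gdist E (f u) (f v))
              \<and> real (gdist E (f u) (f v)) \<le> C * real (gdist tree_adj u v) + C"
  shows "transient V E"
proof -
  obtain D where D: "\<forall>v\<in>V. finite {w. E v w} \<and> card {w. E v w} \<le> D"
    using assms(3) unfolding bounded_degree_def by blast
  have degb: "finite {w. E v w} \<and> card {w. E v w} \<le> D" for v
  proof (cases "v \<in> V")
    case True then show ?thesis using D by blast
  next
    case False
    then have "{w. E v w} = {}" using assms(1) unfolding simple_graph_def by blast
    then show ?thesis by simp
  qed
  show ?thesis unfolding transient_def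
  proof
    fix v assume "v \<in> V"
    show "return_prob E v < 1"
      by (rule ret_lt[where V=V and E=E and f=f and C=C and D=D, OF assms(1,2) degb _ assms(5) _ \<open>v \<in> V\<close>])
         (use assms(4,6) in auto)
  qed
qed


theorem proposition5p3:
  fixes V :: "'a set" and E :: "'a \<Rightarrow> 'a \<Rightarrow> bool"
    and f :: "bool list \<Rightarrow> 'a" and C :: real
  assumes "simple_graph V E"
    and "connected_graph V E"
    and "bounded_degree V E"
    and "\<forall>u. f u \<in> V"
    and "C > 0"
    and "\<forall>u v. real (gdist tree_adj u v) / C - C \<le> real (gdist E (f u) (f v))
              \<and> real (gdist E (f u) (f v)) \<le> C * real (gdist tree_adj u v) + C"
  shows "transient V E"
    by (rule transient_main[OF assms])

end
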